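(* Let $r\ge3$ and let $\mathscr{G}_N$ be a uniformly random $r$-regular (simple) graph on vertex set $[N]$, $N\in2\mathbb{N}$, with law $\mathbf{P}$. Let $\ell=\ell(N)$ be integers with $\ell<\log_{r-1}(5N)$. Call a vertex $x\in[N]$ $\ell$-good if its $\ell$-neighbourhood $B_\ell(x;\mathscr{G}_N)$ is isomorphic as a rooted graph to the $\ell$-neighbourhood $B_\ell(o;\mathscr T)$ of the root $o$ in the infinite $r$-regular tree $\mathscr T$, and $\ell$-bad otherwise; let $\mathrm{bad}^N_\ell$ be the set of $\ell$-bad vertices. Then there exists a constant $K_2<\infty$ such that for all $z>0$, \[ \mathbf{P}\big(|\mathrm{bad}^N_\ell|\ge r^2(r-1)^{2\ell-2}z\big)\le\frac{K_2}{z}. \] *)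

theory Defs
  imports "HOL-Probability.Probability_Mass_Function"
begin

definition RegGraphs :: "nat \<Rightarrow> nat \<Rightarrow> nat set set set" where
  "RegGraphs r N = {E. (\<forall>e\<in>E. card e = 2 \<and> e \<subseteq> {..<N})
                        \<and> (\<forall>x<N. card {e\<in>E. x \<in> e} = r)}"

fun ball_set :: "'a set set \<Rightarrow> nat \<Rightarrow> 'a \<Rightarrow> 'a set" where
  "ball_set E 0 x = {x}"
| "ball_set E (Suc k) x = ball_set E k x \<union> {y. \<exists>z\<in>ball_set E k x. {z, y} \<in> E}"

definition rooted_iso :: "'a set \<Rightarrow> 'a set set \<Rightarrow> 'a \<Rightarrow> 'b set \<Rightarrow> 'b set set \<Rightarrow> 'b \<Rightarrow> bool" where
  "rooted_iso V1 E1 o1 V2 E2 o2 \<longleftrightarrow>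
     (\<exists>f. bij_betw f V1 V2 \<and> f o1 = o2 \<and>
          (\<forall>u\<in>V1. \<forall>v\<in>V1. {u, v} \<in> E1 \<longleftrightarrow> {f u, f v} \<in> E2))"

text \<open>The infinite r-regular tree: vertices are words, root is [], the root has children
  0..r-1 and every other vertex has children 0..r-2; edges join a word to its one-letter
  extensions.\<close>
definition tree_verts :: "nat \<Rightarrow> nat list set" where
  "tree_verts r = {xs. \<forall>i<length xs. xs ! i < (if i = 0 then r else r - 1)}"

definition tree_edges :: "nat \<Rightarrow> nat list set set" where
  "tree_edges r = {{xs, xs @ [a]} | xs a. xs @ [a] \<in> tree_verts r}"

definition good :: "nat \<Rightarrow> nat \<Rightarrow> nat set set \<Rightarrow> nat \<Rightarrow> bool" where
  "good r l E x \<longleftrightarrow>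
     rooted_iso (ball_set E l x) E x (ball_set (tree_edges r) l []) (tree_edges r) []"

definition bad :: "nat \<Rightarrow> nat \<Rightarrow> nat \<Rightarrow> nat set set \<Rightarrow> nat set" where
  "bad r N l E = {x. x < N \<and> \<not> good r l E x}"

end

theory Submission
  imports Defs
begin

definition nbs :: "nat set set \<Rightarrow> nat \<Rightarrow> nat set" where
  "nbs G y = {z. {y, z} \<in> G}"

lemma RG_edge: "G \<in> RegGraphs r N \<Longrightarrow> e \<in> G \<Longrightarrow> card e = 2 \<and> e \<subseteq> {..<N}"
  by (auto simp: RegGraphs_def)

lemma RG_deg: "G \<in> RegGraphs r N \<Longrightarrow> x < N \<Longrightarrow> card {e\<in>G. x \<in> e} = r"
  by (auto simp: RegGraphs_def)

lemma RG_finite: "finite (RegGraphs r N)"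
proof -
  have "RegGraphs r N \<subseteq> Pow (Pow {..<N})" by (auto simp: RegGraphs_def)
  then show ?thesis by (rule finite_subset) auto
qed

lemma RG_G_finite: "G \<in> RegGraphs r N \<Longrightarrow> finite G"
proof -
  assume "G \<in> RegGraphs r N"
  then have "G \<subseteq> Pow {..<N}" by (auto simp: RegGraphs_def)
  then show ?thesis by (rule finite_subset) auto
qed

lemma nbs_lt: "G \<in> RegGraphs r N \<Longrightarrow> z \<in> nbs G y \<Longrightarrow> z < N \<and> y < N"
  using RG_edge[of G r N "{y,z}"] by (auto simp: nbs_def)

lemma nbs_ne: "G \<in> RegGraphs r N \<Longrightarrow> z \<in> nbs G y \<Longrightarrow> z \<noteq> y"
  using RG_edge[of G r N "{y,z}"] by (auto simp: nbs_def)

lemma nbs_sym: "z \<in> nbs G y \<longleftrightarrow> y \<in> nbs G z"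
  by (auto simp: nbs_def insert_commute)

lemma nbs_card: assumes G: "G \<in> RegGraphs r N" and x: "x < N" shows "card (nbs G x) = r"
proof -
  have "bij_betw (\<lambda>z. {x, z}) (nbs G x) {e\<in>G. x \<in> e}"
  proof (rule bij_betwI')
    show "\<And>a b. a \<in> nbs G x \<Longrightarrow> b \<in> nbs G x \<Longrightarrow> ({x, a} = {x, b}) = (a = b)"
      by (auto simp: doubleton_eq_iff)
    show "\<And>a. a \<in> nbs G x \<Longrightarrow> {x, a} \<in> {e \<in> G. x \<in> e}" by (auto simp: nbs_def)
    fix e assume "e \<in> {e \<in> G. x \<in> e}"
    then have e: "e \<in> G" "x \<in> e" by auto
    then have "card e = 2" using RG_edge[OF G] by auto
    then obtain a b where ab: "e = {a,b}" "a \<noteq> b" by (auto simp: card_2_iff)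
    show "\<exists>z\<in>nbs G x. e = {x, z}"
    proof (cases "a = x")
      case True then show ?thesis using e ab by (auto simp: nbs_def)
    next
      case False then have "b = x" using e ab by auto
      then show ?thesis using e ab by (auto simp: nbs_def insert_commute)
    qed
  qed
  then have "card (nbs G x) = card {e\<in>G. x \<in> e}" by (rule bij_betw_same_card)
  then show ?thesis using RG_deg[OF G x] by simp
qed

lemma nbs_finite: "G \<in> RegGraphs r N \<Longrightarrow> finite (nbs G x)"
  by (rule finite_subset[of _ "{..<N}"]) (auto dest: nbs_lt)

lemma nbs_card_le: "G \<in> RegGraphs r N \<Longrightarrow> card (nbs G x) \<le> r"
proof (cases "x < N")
  case False
  assume G: "G \<in> RegGraphs r N"
  then have "nbs G x = {}" using False by (auto dest: nbs_lt)
  then show ?thesis by simp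
qed (simp add: nbs_card)

lemma deg_switch:
  assumes "finite G" "X \<subseteq> G" "Y \<inter> G = {}" "finite Y"
    "card {f\<in>X. y \<in> f} = card {f\<in>Y. y \<in> f}"
  shows "card {f \<in> (G - X) \<union> Y. y \<in> f} = card {f\<in>G. y \<in> f}"
proof -
  have eq: "{f \<in> (G - X) \<union> Y. y \<in> f} = ({f\<in>G. y \<in> f} - {f\<in>X. y \<in> f}) \<union> {f\<in>Y. y \<in> f}"
    by auto
  have fin: "finite {f\<in>G. y \<in> f}" "finite {f\<in>Y. y \<in> f}" using assms by auto
  have sub: "{f\<in>X. y \<in> f} \<subseteq> {f\<in>G. y \<in> f}" using assms by auto
  have "card {f \<in> (G - X) \<union> Y. y \<in> f} = card ({f\<in>G. y \<in> f} - {f\<in>X. y \<in> f}) + card {f\<in>Y. y \<in> f}"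
    unfolding eq by (rule card_Un_disjoint) (use fin assms in auto)
  also have "card ({f\<in>G. y \<in> f} - {f\<in>X. y \<in> f}) = card {f\<in>G. y \<in> f} - card {f\<in>X. y \<in> f}"
    by (rule card_Diff_subset) (use fin sub in \<open>auto intro: finite_subset\<close>)
  finally show ?thesis using card_mono[OF fin(1) sub] assms(5) by simp
qed

lemma card_filter2:
  assumes "p \<noteq> q"
  shows "card {f\<in>{p,q}. y \<in> f} = (if y \<in> p then 1 else 0) + (if y \<in> q then 1 else (0::nat))"
proof -
  have "{f\<in>{p,q}. y \<in> f} = (if y \<in> p then {p} else {}) \<union> (if y \<in> q then {q} else {})" by auto
  then show ?thesis using assms by auto
qed

definition sw :: "nat set set \<Rightarrow> nat \<Rightarrow> nat \<Rightarrow> nat \<Rightarrow> nat \<Rightarrow> nat set set" where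
  "sw G u v a b = (G - {{u,v},{a,b}}) \<union> {{u,a},{v,b}}"

lemma sw_RG:
  assumes G: "G \<in> RegGraphs r N" and d: "u \<noteq> v" "a \<noteq> b" "a \<notin> {u,v}" "b \<notin> {u,v}"
    and in1: "{u,v} \<in> G" "{a,b} \<in> G" and out: "{u,a} \<notin> G" "{v,b} \<notin> G"
  shows "sw G u v a b \<in> RegGraphs r N"
proof -
  have lt: "u < N" "v < N" "a < N" "b < N" using RG_edge[OF G in1(1)] RG_edge[OF G in1(2)] by auto
  have "\<forall>e\<in>sw G u v a b. card e = 2 \<and> e \<subseteq> {..<N}"
    using G d lt unfolding sw_def by (auto simp: RegGraphs_def)
  moreover have "card {e\<in>sw G u v a b. y \<in> e} = r" if y: "y < N" for y
  proof -
    have "card {e\<in>sw G u v a b. y \<in> e} = card {e\<in>G. y \<in> e}"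
      unfolding sw_def
    proof (rule deg_switch)
      show "finite G" using RG_G_finite[OF G] .
      show "{{u, v}, {a, b}} \<subseteq> G" using in1 by auto
      show "{{u, a}, {v, b}} \<inter> G = {}" using out by auto
      show "finite {{u, a}, {v, b}}" by simp
      have n1: "{u,v} \<noteq> {a,b}" using d by (auto simp: doubleton_eq_iff)
      have n2: "{u,a} \<noteq> {v,b}" using d by (auto simp: doubleton_eq_iff)
      show "card {f \<in> {{u, v}, {a, b}}. y \<in> f} = card {f \<in> {{u, a}, {v, b}}. y \<in> f}"
        unfolding card_filter2[OF n1] card_filter2[OF n2] using d by auto
    qed
    then show ?thesis using RG_deg[OF G y] by simp
  qed
  ultimately show ?thesis by (auto simp: RegGraphs_def)
qed

definition pairs :: "nat set set \<Rightarrow> (nat \<times> nat) set" where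
  "pairs G = {(a,b). {a,b} \<in> G}"

lemma pairs_card: assumes G: "G \<in> RegGraphs r N" shows "card (pairs G) = r * N"
proof -
  have "pairs G = Sigma {..<N} (nbs G)"
    using nbs_lt[OF G] by (auto simp: pairs_def nbs_def)
  then have "card (pairs G) = (\<Sum>a<N. card (nbs G a))"
    by (simp add: card_SigmaI nbs_finite[OF G])
  also have "\<dots> = (\<Sum>a<N. r)" by (rule sum.cong) (auto simp: nbs_card[OF G])
  finally show ?thesis by simp
qed

lemma pairs_sub: "G \<in> RegGraphs r N \<Longrightarrow> pairs G \<subseteq> {..<N} \<times> {..<N}"
  using nbs_lt[of G r N] by (auto simp: pairs_def nbs_def)

lemma card_Sigma_nbs: assumes G: "G \<in> RegGraphs r N" and A: "finite A"
  shows "card (Sigma A (nbs G)) \<le> card A * r" "finite (Sigma A (nbs G))"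
proof -
  show "finite (Sigma A (nbs G))" using nbs_finite[OF G] A by auto
  have "card (Sigma A (nbs G)) = (\<Sum>a\<in>A. card (nbs G a))"
    by (simp add: card_SigmaI nbs_finite[OF G] A)
  also have "\<dots> \<le> (\<Sum>a\<in>A. r)" by (rule sum_mono) (rule nbs_card_le[OF G])
  finally show "card (Sigma A (nbs G)) \<le> card A * r" by simp
qed

lemma fwd_bound:
  assumes G: "G \<in> RegGraphs r N" and T: "finite T" "\<forall>t\<in>T. card t = 2"
  shows "r * N \<le> card {(a,b). {a,b} \<in> G \<and> {a,b} \<notin> T \<and> a \<notin> {u,v} \<and> b \<notin> {u,v} \<and> {u,a} \<notin> G \<and> {v,b} \<notin> G}
     + 4 * card T + 4 * r + 2 * r^2"
proof -
  define Fw where "Fw = {(a,b). {a,b} \<in> G \<and> {a,b} \<notin> T \<and> a \<notin> {u,v} \<and> b \<notin> {u,v} \<and> {u,a} \<notin> G \<and> {v,b} \<notin> G}"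
  define X1 where "X1 = (\<Union>t\<in>T. t \<times> t)"
  define X2 where "X2 = Sigma {u,v} (nbs G)"
  define X3 where "X3 = prod.swap ` Sigma {u,v} (nbs G)"
  define X4 where "X4 = Sigma (nbs G u) (nbs G)"
  define X5 where "X5 = prod.swap ` Sigma (nbs G v) (nbs G)"
  have sub: "pairs G \<subseteq> Fw \<union> X1 \<union> X2 \<union> X3 \<union> X4 \<union> X5"
  proof
    fix p assume "p \<in> pairs G"
    then obtain a b where p: "p = (a,b)" "{a,b} \<in> G" by (auto simp: pairs_def)
    show "p \<in> Fw \<union> X1 \<union> X2 \<union> X3 \<union> X4 \<union> X5"
    proof (cases "p \<in> Fw")
      case False
      then consider "{a,b} \<in> T" | "a \<in> {u,v}" | "b \<in> {u,v}" | "{u,a} \<in> G" | "{v,b} \<in> G"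
        using p by (auto simp: Fw_def)
      then show ?thesis
      proof cases
        case 1 then show ?thesis using p by (auto simp: X1_def)
      next
        case 2 then show ?thesis using p by (auto simp: X2_def nbs_def)
      next
        case 3 then have "(b,a) \<in> Sigma {u,v} (nbs G)" using p by (auto simp: nbs_def insert_commute)
        then show ?thesis using p unfolding X3_def by (auto intro: image_eqI[where x="(b,a)"])
      next
        case 4 then show ?thesis using p by (auto simp: X4_def nbs_def)
      next
        case 5 then have "(b,a) \<in> Sigma (nbs G v) (nbs G)" using p by (auto simp: nbs_def insert_commute)
        then show ?thesis using p unfolding X5_def by (auto intro: image_eqI[where x="(b,a)"])
      qed
    qed simp
  qed
  have finF: "finite Fw"
    by (rule finite_subset[of _ "pairs G"], force simp: Fw_def pairs_def,
        rule finite_subset[OF pairs_sub[OF G]], simp)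
  have c1: "card X1 \<le> 4 * card T"
  proof -
    have "card X1 \<le> (\<Sum>t\<in>T. card (t \<times> t))" unfolding X1_def by (rule card_UN_le[OF T(1)])
    also have "\<dots> = (\<Sum>t\<in>T. 4)" by (rule sum.cong) (use T in \<open>auto simp: card_cartesian_product\<close>)
    finally show ?thesis by simp
  qed
  have f1: "finite X1" unfolding X1_def using T
    by (auto intro!: finite_UN_I simp: card_ge_0_finite)
  have "card {u,v} \<le> 2" by (cases "u = v") auto
  then have cS: "card (Sigma {u,v} (nbs G)) \<le> 2 * r"
    using card_Sigma_nbs(1)[OF G, of "{u,v}", simplified] by (meson le_trans mult_le_mono1)
  have c2: "card X2 \<le> 2 * r" using cS by (simp add: X2_def)
  have c3: "card X3 \<le> 2 * r" unfolding X3_def using cS card_image_le[of "Sigma {u,v} (nbs G)" prod.swap]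
    card_Sigma_nbs(2)[OF G, of "{u,v}", simplified] by simp
  have c4: "card X4 \<le> r^2" unfolding X4_def using card_Sigma_nbs(1)[OF G nbs_finite[OF G, of u]] nbs_card_le[OF G, of u]
    by (simp add: power2_eq_square) (meson le_trans mult_le_mono1)
  have c5: "card X5 \<le> r^2" unfolding X5_def using card_Sigma_nbs[OF G nbs_finite[OF G, of v]] nbs_card_le[OF G, of v]
     card_image_le[of "Sigma (nbs G v) (nbs G)" prod.swap] nbs_finite[OF G]
    by (simp add: power2_eq_square) (meson le_trans mult_le_mono1)
  have f2: "finite X2" "finite X3" "finite X4" "finite X5"
    unfolding X2_def X3_def X4_def X5_def using card_Sigma_nbs(2)[OF G] nbs_finite[OF G] by auto
  have "r * N = card (pairs G)" using pairs_card[OF G] by simp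
  also have "\<dots> \<le> card (Fw \<union> X1 \<union> X2 \<union> X3 \<union> X4 \<union> X5)"
    by (rule card_mono) (use finF f1 f2 sub in auto)
  also have "\<dots> \<le> card Fw + card X1 + card X2 + card X3 + card X4 + card X5"
    by (meson card_Un_le add_le_mono le_trans order_refl)
  finally show ?thesis unfolding Fw_def[symmetric] using c1 c2 c3 c4 c5 by linarith
qed

lemma switching:
  assumes T: "finite T" "\<forall>t\<in>T. card t = 2" and uv: "u \<noteq> v" "{u,v} \<notin> T"
  shows "real (card {G\<in>RegGraphs r N. T \<subseteq> G \<and> {u,v} \<in> G}) * (real r * N - 4 * card T - 4*r - 2*r^2)
     \<le> r^2 * card {G\<in>RegGraphs r N. T \<subseteq> G}"
proof -
  define S where "S = RegGraphs r N"
  define A where "A = {G\<in>S. T \<subseteq> G \<and> {u,v} \<in> G}"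
  define B where "B = {G\<in>S. T \<subseteq> G}"
  define Fw where "Fw = (\<lambda>G. {(a,b). {a,b} \<in> G \<and> {a,b} \<notin> T \<and> a \<notin> {u,v} \<and> b \<notin> {u,v} \<and> {u,a} \<notin> G \<and> {v,b} \<notin> G})"
  define \<Phi> where "\<Phi> = Sigma A Fw"
  define h where "h = (\<lambda>(G::nat set set,(a::nat,b::nat)). (sw G u v a b, (a,b)))"
  define D where "D = real r * N - 4 * card T - 4*r - 2*r^2"
  have finS: "finite S" unfolding S_def by (rule RG_finite)
  have finA: "finite A" "finite B" using finS by (auto simp: A_def B_def)
  have finF: "finite (Fw G)" if "G \<in> S" for G
    by (rule finite_subset[of _ "pairs G"], force simp: Fw_def pairs_def,
        rule finite_subset[OF pairs_sub], use that S_def in auto)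
  have finPhi: "finite \<Phi>" unfolding \<Phi>_def
    by (rule finite_SigmaI) (use finA finF in \<open>auto simp: A_def\<close>)
  have "real (card A) * D = (\<Sum>G\<in>A. D)" by simp
  also have "\<dots> \<le> (\<Sum>G\<in>A. real (card (Fw G)))"
  proof (rule sum_mono)
    fix G assume "G \<in> A"
    then have G: "G \<in> RegGraphs r N" by (auto simp: A_def S_def)
    have "real (r * N) \<le> real (card (Fw G) + 4 * card T + 4 * r + 2 * r^2)"
      using fwd_bound[OF G T, of u v] unfolding Fw_def of_nat_le_iff .
    then show "D \<le> real (card (Fw G))"
      unfolding D_def of_nat_add of_nat_mult of_nat_power by linarith
  qed
  also have "\<dots> = real (card \<Phi>)"
  proof -
    have "card \<Phi> = (\<Sum>G\<in>A. card (Fw G))" unfolding \<Phi>_def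
      by (rule card_SigmaI) (use finA finF in \<open>auto simp: A_def\<close>)
    then show ?thesis by simp
  qed
  also have "real (card \<Phi>) = real (card (h ` \<Phi>))"
  proof (rule arg_cong[where f=real], rule card_image[symmetric], rule inj_onI)
    fix p1 p2 assume p1: "p1 \<in> \<Phi>" and p2: "p2 \<in> \<Phi>" and eq: "h p1 = h p2"
    obtain G1 a1 b1 where P1: "p1 = (G1,(a1,b1))" by (cases p1) auto
    obtain G2 a2 b2 where P2: "p2 = (G2,(a2,b2))" by (cases p2) auto
    have ab: "a1 = a2" "b1 = b2" and sweq: "sw G1 u v a1 b1 = sw G2 u v a1 b1"
      using eq by (auto simp: P1 P2 h_def)
    have rec: "G = insert {u,v} (insert {a,b} (sw G u v a b - {{u,a},{v,b}}))"
      if "(G,(a,b)) \<in> \<Phi>" for G a b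
    proof -
      have G: "G \<in> RegGraphs r N" "{u,v} \<in> G" "{a,b} \<in> G" "a \<notin> {u,v}" "b \<notin> {u,v}" "{u,a} \<notin> G" "{v,b} \<notin> G"
        using that by (auto simp: \<Phi>_def A_def S_def Fw_def)
      then have "a \<noteq> b" using RG_edge[OF G(1) G(3)] by (auto simp: card_insert_if)
      then show ?thesis using G unfolding sw_def by auto
    qed
    have "G1 = insert {u,v} (insert {a1,b1} (sw G1 u v a1 b1 - {{u,a1},{v,b1}}))"
      using rec[of G1 a1 b1] p1 P1 by simp
    also have "\<dots> = insert {u,v} (insert {a1,b1} (sw G2 u v a1 b1 - {{u,a1},{v,b1}}))"
      using sweq by simp
    also have "\<dots> = G2" using rec[of G2 a2 b2] p2 P2 ab by simp
    finally have "G1 = G2" .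
    then show "p1 = p2" using P1 P2 ab by simp
  qed
  also have "real (card (h ` \<Phi>)) \<le> real (card (Sigma B (\<lambda>G'. nbs G' u \<times> nbs G' v)))"
  proof (rule of_nat_mono, rule card_mono)
    show "finite (Sigma B (\<lambda>G'. nbs G' u \<times> nbs G' v))"
      using finA nbs_finite by (auto simp: B_def S_def)
    show "h ` \<Phi> \<subseteq> Sigma B (\<lambda>G'. nbs G' u \<times> nbs G' v)"
    proof
      fix y assume "y \<in> h ` \<Phi>"
      then obtain G a b where y: "y = h (G,(a,b))" and P: "(G,(a,b)) \<in> \<Phi>" by auto
      have G: "G \<in> RegGraphs r N" "{u,v} \<in> G" "{a,b} \<in> G" "a \<notin> {u,v}" "b \<notin> {u,v}" "{u,a} \<notin> G" "{v,b} \<notin> G"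
        "T \<subseteq> G" "{a,b} \<notin> T"
        using P by (auto simp: \<Phi>_def A_def S_def Fw_def)
      then have ab: "a \<noteq> b" using RG_edge[OF G(1) G(3)] by (auto simp: card_insert_if)
      have "sw G u v a b \<in> RegGraphs r N" by (rule sw_RG) (use G ab uv in auto)
      moreover have "T \<subseteq> sw G u v a b" using G uv unfolding sw_def by auto
      moreover have "{u,a} \<in> sw G u v a b" "{v,b} \<in> sw G u v a b" by (auto simp: sw_def)
      ultimately show "y \<in> Sigma B (\<lambda>G'. nbs G' u \<times> nbs G' v)"
        using y by (simp add: h_def B_def S_def nbs_def)
    qed
  qed
  also have "real (card (Sigma B (\<lambda>G'. nbs G' u \<times> nbs G' v))) = real (\<Sum>G'\<in>B. card (nbs G' u) * card (nbs G' v))"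
    using finA by (subst card_SigmaI) (auto simp: card_cartesian_product nbs_finite B_def S_def)
  also have "\<dots> \<le> real (\<Sum>G'\<in>B. r * r)"
    by (rule of_nat_mono, rule sum_mono, rule mult_le_mono) (auto intro: nbs_card_le simp: B_def S_def)
  finally have calc: "real (card A) * D \<le> real (\<Sum>G'\<in>B. r * r)" .
  have e1: "real (\<Sum>G'\<in>B. r * r) = real r ^ 2 * real (card B)" by (simp add: power2_eq_square)
  have e2: "card {G\<in>RegGraphs r N. T \<subseteq> G \<and> {u, v} \<in> G} = card A" by (simp add: A_def S_def)
  have e3: "card {G\<in>RegGraphs r N. T \<subseteq> G} = card B" by (simp add: B_def S_def)
  show ?thesis unfolding e2 e3 using calc unfolding e1 D_def by simp
qed

definition pedges :: "nat list \<Rightarrow> nat set set" where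
  "pedges p = {{p!i, p!Suc i} | i. Suc i < length p}"

definition is_path :: "nat set set \<Rightarrow> nat \<Rightarrow> nat list \<Rightarrow> bool" where
  "is_path G x p \<longleftrightarrow> p \<noteq> [] \<and> hd p = x \<and> distinct p \<and> pedges p \<subseteq> G"

definition witness :: "nat set set \<Rightarrow> nat \<Rightarrow> nat \<Rightarrow> bool" where
  "witness G l x \<longleftrightarrow> (\<exists>p q. is_path G x p \<and> is_path G x q \<and> length p \<le> Suc l \<and> length q \<le> Suc l
      \<and> {last p, last q} \<in> G \<and> {last p, last q} \<notin> pedges p \<union> pedges q)"

lemma pedges_single[simp]: "pedges [x] = {}"
  by (auto simp: pedges_def)

lemma pedges_snoc: "p \<noteq> [] \<Longrightarrow> pedges (p @ [y]) = pedges p \<union> {{last p, y}}"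
proof -
  assume p: "p \<noteq> []"
  show ?thesis
  proof
    show "pedges (p @ [y]) \<subseteq> pedges p \<union> {{last p, y}}"
    proof
      fix e assume "e \<in> pedges (p @ [y])"
      then obtain i where i: "e = {(p@[y])!i, (p@[y])!Suc i}" "Suc i < Suc (length p)"
        by (auto simp: pedges_def)
      show "e \<in> pedges p \<union> {{last p, y}}"
      proof (cases "Suc i < length p")
        case True then show ?thesis using i by (auto simp: pedges_def nth_append)
      next
        case False then have "i = length p - 1" using i by auto
        then show ?thesis using i p by (auto simp: nth_append last_conv_nth)
      qed
    qed
    show "pedges p \<union> {{last p, y}} \<subseteq> pedges (p @ [y])"
    proof
      fix e assume "e \<in> pedges p \<union> {{last p, y}}"
      then consider "e \<in> pedges p" | "e = {last p, y}" by auto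
      then show "e \<in> pedges (p @ [y])"
      proof cases
        case 1 then obtain i where "e = {p!i, p!Suc i}" "Suc i < length p" by (auto simp: pedges_def)
        then show ?thesis unfolding pedges_def
          by (intro CollectI exI[of _ i]) (auto simp: nth_append)
      next
        case 2 then show ?thesis unfolding pedges_def using p
          by (intro CollectI exI[of _ "length p - 1"]) (auto simp: nth_append last_conv_nth)
      qed
    qed
  qed
qed

lemma pedges_take: "pedges (take k p) \<subseteq> pedges p"
  by (auto simp: pedges_def)

lemma pedges_sub_set: "e \<in> pedges p \<Longrightarrow> e \<subseteq> set p"
  by (auto simp: pedges_def)

lemma pedges_last:
  assumes "distinct p" "{last p, y} \<in> pedges p"
  shows "length p \<ge> 2 \<and> y = p ! (length p - 2)"
proof -
  obtain i where i: "{last p, y} = {p!i, p!Suc i}" "Suc i < length p"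
    using assms by (auto simp: pedges_def)
  have "p \<noteq> []" using i by auto
  then have lp: "last p = p ! (length p - 1)" by (simp add: last_conv_nth)
  show ?thesis
  proof (cases "last p = p!i")
    case True
    then have "i = length p - 1" using lp assms(1) i by (simp add: nth_eq_iff_index_eq)
    then show ?thesis using i by simp
  next
    case False
    then have "last p = p!Suc i" "y = p!i" using i by (auto simp: doubleton_eq_iff)
    then have "Suc i = length p - 1" using lp assms(1) i by (simp add: nth_eq_iff_index_eq)
    then have "i = length p - 2" by simp
    then show ?thesis using i \<open>y = p!i\<close> by simp
  qed
qed

lemma is_path_take: "is_path G x p \<Longrightarrow> is_path G x (take (Suc j) p)"
  unfolding is_path_def using pedges_take[of "Suc j" p]
  by (auto simp: hd_take)

lemma is_path_lt: assumes G: "G \<in> RegGraphs r N" and x: "x < N" and p: "is_path G x p"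
  shows "set p \<subseteq> {..<N}"
proof
  fix y assume "y \<in> set p"
  then obtain i where i: "i < length p" "y = p!i" by (auto simp: in_set_conv_nth)
  show "y \<in> {..<N}"
  proof (cases i)
    case 0 then show ?thesis using p i x by (auto simp: is_path_def hd_conv_nth)
  next
    case (Suc j)
    then have "{p!j, p!i} \<in> G" using p i unfolding is_path_def pedges_def by auto
    then show ?thesis using RG_edge[OF G] i by auto
  qed
qed

lemma tv_Nil: "[] \<in> tree_verts r" by (simp add: tree_verts_def)

lemma tv_snoc: "w @ [a] \<in> tree_verts r \<longleftrightarrow> w \<in> tree_verts r \<and> a < (if w = [] then r else r - 1)"
  unfolding tree_verts_def
  by (auto simp: nth_append less_Suc_eq)

lemma tv_butlast: "w \<in> tree_verts r \<Longrightarrow> butlast w \<in> tree_verts r"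
  by (cases w rule: rev_cases) (auto simp: tv_snoc)

lemma te_iff: "{s, t} \<in> tree_edges r \<longleftrightarrow> (\<exists>a. t = s @ [a] \<and> t \<in> tree_verts r) \<or> (\<exists>a. s = t @ [a] \<and> s \<in> tree_verts r)"
  unfolding tree_edges_def by (auto simp: doubleton_eq_iff)

lemma tree_ball: "ball_set (tree_edges r) k [] = {w \<in> tree_verts r. length w \<le> k}"
proof (induction k)
  case 0 then show ?case by (auto simp: tv_Nil)
next
  case (Suc k)
  show ?case
  proof
    show "ball_set (tree_edges r) (Suc k) [] \<subseteq> {w \<in> tree_verts r. length w \<le> Suc k}"
    proof
      fix y assume "y \<in> ball_set (tree_edges r) (Suc k) []"
      then consider "y \<in> ball_set (tree_edges r) k []" | z where "z \<in> ball_set (tree_edges r) k []" "{z, y} \<in> tree_edges r"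
        by auto
      then show "y \<in> {w \<in> tree_verts r. length w \<le> Suc k}"
      proof cases
        case 1 then show ?thesis using Suc by auto
      next
        case 2
        then have z: "z \<in> tree_verts r" "length z \<le> k" using Suc by auto
        from 2(2) consider a where "y = z @ [a]" "y \<in> tree_verts r" | a where "z = y @ [a]" "z \<in> tree_verts r"
          unfolding te_iff by blast
        then show ?thesis
        proof cases
          case 1 then show ?thesis using z by auto
        next
          case 2 then show ?thesis using z by (auto simp: tv_snoc)
        qed
      qed
    qed
    show "{w \<in> tree_verts r. length w \<le> Suc k} \<subseteq> ball_set (tree_edges r) (Suc k) []"
    proof
      fix w assume w: "w \<in> {w \<in> tree_verts r. length w \<le> Suc k}"
      show "w \<in> ball_set (tree_edges r) (Suc k) []"
      proof (cases "length w \<le> k")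
        case True then show ?thesis using Suc w by auto
      next
        case False
        then have "w \<noteq> []" by auto
        then obtain w' a where wa: "w = w' @ [a]" by (cases w rule: rev_cases) auto
        then have "w' \<in> ball_set (tree_edges r) k []" using Suc w False by (auto simp: tv_snoc)
        moreover have "{w', w} \<in> tree_edges r" unfolding te_iff using wa w by auto
        ultimately show ?thesis by auto
      qed
    qed
  qed
qed

definition cand :: "nat set set \<Rightarrow> nat list \<Rightarrow> nat list" where
  "cand G p = (if length p = 1 then sorted_list_of_set (nbs G (last p))
     else filter (\<lambda>z. z \<noteq> p ! (length p - 2)) (sorted_list_of_set (nbs G (last p))))"

definition vp :: "nat set set \<Rightarrow> nat \<Rightarrow> nat list \<Rightarrow> nat list" where
  "vp G x w = foldl (\<lambda>p a. p @ [cand G p ! a]) [x] w"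

definition gv :: "nat set set \<Rightarrow> nat \<Rightarrow> nat list \<Rightarrow> nat" where
  "gv G x w = last (vp G x w)"

lemma vp_Nil[simp]: "vp G x [] = [x]" by (simp add: vp_def)

lemma vp_snoc: "vp G x (w @ [a]) = vp G x w @ [cand G (vp G x w) ! a]"
  by (simp add: vp_def)

lemma vp_length[simp]: "length (vp G x w) = Suc (length w)"
  by (induction w rule: rev_induct) (auto simp: vp_snoc)

lemma vp_ne[simp]: "vp G x w \<noteq> []"
  using vp_length[of G x w] by (metis Zero_not_Suc list.size(3))

lemma vp_hd: "hd (vp G x w) = x"
  by (induction w rule: rev_induct) (auto simp: vp_snoc hd_append)

lemma gv_snoc: "gv G x (w @ [a]) = cand G (vp G x w) ! a"
  by (simp add: gv_def vp_snoc)

lemma vp_prev: "w \<noteq> [] \<Longrightarrow> vp G x w ! (length (vp G x w) - 2) = gv G x (butlast w)"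
proof -
  assume "w \<noteq> []"
  then obtain w' a where w: "w = w' @ [a]" by (cases w rule: rev_cases) auto
  show ?thesis unfolding w vp_snoc gv_def
    by (simp add: nth_append last_conv_nth)
qed

lemma vp_snoc': "w \<noteq> [] \<Longrightarrow> vp G x w = vp G x (butlast w) @ [gv G x w]"
proof -
  assume "w \<noteq> []"
  then obtain w' a where w: "w = w' @ [a]" by (cases w rule: rev_cases) auto
  show ?thesis unfolding w vp_snoc gv_def by simp
qed

lemma cand_props:
  assumes G: "G \<in> RegGraphs r N" and x: "x < N" and p: "is_path G x p"
  shows "distinct (cand G p)"
    "set (cand G p) = nbs G (last p) - (if length p = 1 then {} else {p ! (length p - 2)})"
    "length (cand G p) = (if length p = 1 then r else r - 1)"
proof -
  have pne: "p \<noteq> []" using p by (simp add: is_path_def)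
  have lt: "last p < N" using is_path_lt[OF G x p] pne by (meson last_in_set lessThan_iff subsetD)
  have fin: "finite (nbs G (last p))" using nbs_finite[OF G] .
  have card: "card (nbs G (last p)) = r" using nbs_card[OF G lt] .
  show "distinct (cand G p)" by (simp add: cand_def)
  show "set (cand G p) = nbs G (last p) - (if length p = 1 then {} else {p ! (length p - 2)})"
    using fin by (auto simp: cand_def)
  show "length (cand G p) = (if length p = 1 then r else r - 1)"
  proof (cases "length p = 1")
    case True then show ?thesis using card fin by (simp add: cand_def)
  next
    case False
    then have l2: "length p \<ge> 2" using pne by (cases p) (auto simp: Suc_le_eq)
    have "{p ! (length p - 2), p ! Suc (length p - 2)} \<in> pedges p"
      unfolding pedges_def using l2 by (intro CollectI exI[of _ "length p - 2"]) auto
    moreover have "Suc (length p - 2) = length p - 1" using l2 by simp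
    ultimately have "{p ! (length p - 2), last p} \<in> G" using p pne
      by (auto simp: is_path_def last_conv_nth)
    then have mem: "p ! (length p - 2) \<in> nbs G (last p)" by (auto simp: nbs_def insert_commute)
    have "length (cand G p) = card ({z. z \<noteq> p ! (length p - 2)} \<inter> nbs G (last p))"
      using False fin by (simp add: cand_def distinct_length_filter)
    also have "{z. z \<noteq> p ! (length p - 2)} \<inter> nbs G (last p) = nbs G (last p) - {p ! (length p - 2)}" by auto
    also have "card \<dots> = r - 1" using card mem fin by simp
    finally show ?thesis using False by simp
  qed
qed

context
  fixes G r N x l
  assumes G: "G \<in> RegGraphs r N" and x: "x < N" and nw: "\<not> witness G l x"
begin

lemma walk_path: "w \<in> tree_verts r \<Longrightarrow> length w \<le> l \<Longrightarrow> is_path G x (vp G x w)"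
proof (induction w rule: rev_induct)
  case Nil then show ?case by (simp add: is_path_def)
next
  case (snoc a w)
  have wtv: "w \<in> tree_verts r" and a: "a < (if w = [] then r else r - 1)" using snoc.prems by (auto simp: tv_snoc)
  define p where "p = vp G x w"
  have pp: "is_path G x p" using snoc wtv unfolding p_def by auto
  have lenp: "length p = Suc (length w)" by (simp add: p_def)
  define y where "y = cand G p ! a"
  have alen: "a < length (cand G p)" using cand_props(3)[OF G x pp] a lenp by (cases "w = []") auto
  have yin: "y \<in> set (cand G p)" using alen by (simp add: y_def)
  then have ynb: "y \<in> nbs G (last p)" and ynp: "length p \<noteq> 1 \<Longrightarrow> y \<noteq> p ! (length p - 2)"
    using cand_props(2)[OF G x pp] by (auto split: if_splits)
  have edge: "{last p, y} \<in> G" using ynb by (simp add: nbs_def)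
  have pne: "p \<noteq> []" using pp by (simp add: is_path_def)
  have ynotin: "y \<notin> set p"
  proof
    assume "y \<in> set p"
    then obtain j where j: "j < length p" "p ! j = y" by (auto simp: in_set_conv_nth)
    define q where "q = take (Suc j) p"
    have qp: "is_path G x q" unfolding q_def by (rule is_path_take[OF pp])
    have lq: "last q = y" using j by (simp add: q_def take_Suc_conv_app_nth)
    have n1: "{last p, y} \<notin> pedges p"
    proof
      assume "{last p, y} \<in> pedges p"
      then have "length p \<ge> 2 \<and> y = p ! (length p - 2)" using pedges_last pp by (auto simp: is_path_def)
      then show False using ynp by auto
    qed
    have n2: "{last p, y} \<notin> pedges q" using n1 pedges_take[of "Suc j" p] by (auto simp: q_def)
    have "witness G l x" unfolding witness_def
      apply (rule exI[of _ p], rule exI[of _ q])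
      using pp qp lq edge n1 n2 lenp snoc.prems(2) length_take[of "Suc j" p]
      by (auto simp: q_def)
    then show False using nw by simp
  qed
  show ?case unfolding vp_snoc p_def[symmetric] y_def[symmetric] is_path_def
    using pp ynotin edge pedges_snoc[OF pne, of y] by (auto simp: is_path_def hd_append)
qed

lemma hd_ne_last: assumes "distinct p" "length p \<ge> 2" shows "hd p \<noteq> last p"
proof (cases p)
  case Nil then show ?thesis using assms by simp
next
  case (Cons a p')
  then have "p' \<noteq> []" using assms by auto
  then show ?thesis using assms Cons by auto
qed

lemma gv_inj: "s \<in> tree_verts r \<Longrightarrow> t \<in> tree_verts r \<Longrightarrow> length s \<le> l \<Longrightarrow> length t \<le> l
   \<Longrightarrow> gv G x s = gv G x t \<Longrightarrow> s = t"
proof (induction "length s + length t" arbitrary: s t rule: less_induct)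
  case less
  have nil: False if "u = []" "v \<noteq> []" "v \<in> tree_verts r" "length v \<le> l" "gv G x u = gv G x v" for u v
  proof -
    have pv: "is_path G x (vp G x v)" using walk_path that by auto
    have "length (vp G x v) \<ge> 2" using that by (cases v) auto
    then have "hd (vp G x v) \<noteq> last (vp G x v)" using pv hd_ne_last[of "vp G x v"] by (simp add: is_path_def)
    then show False using that vp_hd[of G x v] by (simp add: gv_def)
  qed
  show ?case
  proof (cases "s = [] \<or> t = []")
    case True
    then show ?thesis using nil[of s t] nil[of t s] less.prems by auto
  next
    case False
    then have sne: "s \<noteq> []" and tne: "t \<noteq> []" by auto
    define s' where "s' = butlast s"
    define t' where "t' = butlast t"
    have s'tv: "s' \<in> tree_verts r" "t' \<in> tree_verts r" using tv_butlast less.prems by (auto simp: s'_def t'_def)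
    have s'l: "length s' \<le> l" "length t' \<le> l" using less.prems by (auto simp: s'_def t'_def)
    have ps: "is_path G x (vp G x s)" and pt: "is_path G x (vp G x t)" using walk_path less.prems by auto
    have ps': "is_path G x (vp G x s')" using walk_path s'tv s'l by auto
    have vs: "vp G x s = vp G x s' @ [gv G x s]" using vp_snoc'[OF sne] by (simp add: s'_def)
    have "gv G x s' = gv G x t'"
    proof (rule ccontr)
      assume ne: "gv G x s' \<noteq> gv G x t'"
      define p where "p = vp G x s'"
      define q where "q = vp G x t"
      have lp: "last p = gv G x s'" and lq: "last q = gv G x s" using less.prems by (auto simp: p_def q_def gv_def)
      have "pedges (vp G x s) = pedges p \<union> {{gv G x s', gv G x s}}"
        unfolding vs p_def[symmetric] using pedges_snoc[of p] lp by (simp add: p_def)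
      then have edge: "{gv G x s', gv G x s} \<in> G" using ps by (auto simp: is_path_def)
      have nin: "gv G x s \<notin> set p" using ps unfolding vs p_def is_path_def by auto
      have n1: "{gv G x s', gv G x s} \<notin> pedges p" using nin pedges_sub_set by blast
      have n2: "{gv G x s', gv G x s} \<notin> pedges q"
      proof
        assume "{gv G x s', gv G x s} \<in> pedges q"
        then have "{last q, gv G x s'} \<in> pedges q" using lq by (simp add: insert_commute)
        moreover have "distinct q" using pt by (simp add: is_path_def q_def)
        ultimately have "gv G x s' = q ! (length q - 2)" using pedges_last[of q "gv G x s'"] by blast
        also have "\<dots> = gv G x t'" unfolding q_def t'_def by (rule vp_prev[OF tne])
        finally show False using ne by simp
      qed
      have "witness G l x" unfolding witness_def
        apply (rule exI[of _ p], rule exI[of _ q])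
        using ps' pt lp lq edge n1 n2 s'l less.prems(4) by (auto simp: p_def q_def)
      then show False using nw by simp
    qed
    moreover have "length s' + length t' < length s + length t" using sne tne by (cases s; cases t) (simp_all add: s'_def t'_def)
    ultimately have st: "s' = t'" using less.hyps s'tv s'l by blast
    define a where "a = last s"
    define b where "b = last t"
    have sa: "s = s' @ [a]" and tb: "t = s' @ [b]" using sne tne st append_butlast_last_id[of s] append_butlast_last_id[of t]
      by (auto simp: s'_def t'_def a_def b_def)
    have ab: "a < length (cand G (vp G x s'))" "b < length (cand G (vp G x s'))"
      using less.prems(1,2) cand_props(3)[OF G x ps'] unfolding sa tb tv_snoc by (auto split: if_splits)
    have "cand G (vp G x s') ! a = cand G (vp G x s') ! b"
      using less.prems(5) unfolding sa tb gv_snoc[symmetric] .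
    then have "a = b" using ab cand_props(1)[OF G x ps'] by (simp add: nth_eq_iff_index_eq)
    then show ?thesis using sa tb by simp
  qed
qed

lemma gv_image: "k \<le> l \<Longrightarrow> gv G x ` {w \<in> tree_verts r. length w \<le> k} = ball_set G k x"
proof (induction k)
  case 0
  have "{w \<in> tree_verts r. length w \<le> 0} = {[]}" using tv_Nil by auto
  then show ?case by (simp add: gv_def)
next
  case (Suc k)
  then have IH: "gv G x ` {w \<in> tree_verts r. length w \<le> k} = ball_set G k x" by simp
  have bs: "ball_set G (Suc k) x = ball_set G k x \<union> {y. \<exists>z\<in>ball_set G k x. {z, y} \<in> G}"
    by (simp only: ball_set.simps)
  show ?case
  proof
    show "gv G x ` {w \<in> tree_verts r. length w \<le> Suc k} \<subseteq> ball_set G (Suc k) x"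
    proof
      fix y assume "y \<in> gv G x ` {w \<in> tree_verts r. length w \<le> Suc k}"
      then obtain w where w: "w \<in> tree_verts r" "length w \<le> Suc k" "y = gv G x w" by blast
      show "y \<in> ball_set G (Suc k) x"
      proof (cases "length w \<le> k")
        case True
        then have "y \<in> ball_set G k x" unfolding IH[symmetric] using w by blast
        then show ?thesis unfolding bs by blast
      next
        case False
        then have wne: "w \<noteq> []" by auto
        have pw: "is_path G x (vp G x w)" using walk_path w Suc.prems by simp
        have z: "gv G x (butlast w) \<in> ball_set G k x" unfolding IH[symmetric]
          using w tv_butlast[OF w(1)] by simp
        have "pedges (vp G x w) = pedges (vp G x (butlast w)) \<union> {{gv G x (butlast w), gv G x w}}"
          using vp_snoc'[OF wne] pedges_snoc[of "vp G x (butlast w)" "gv G x w"] by (simp add: gv_def)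
        then have "{gv G x (butlast w), y} \<in> G" using pw w(3) by (simp add: is_path_def)
        then show ?thesis unfolding bs using z by blast
      qed
    qed
    show "ball_set G (Suc k) x \<subseteq> gv G x ` {w \<in> tree_verts r. length w \<le> Suc k}"
    proof
      fix y assume "y \<in> ball_set G (Suc k) x"
      then consider "y \<in> ball_set G k x" | z where "z \<in> ball_set G k x" "{z, y} \<in> G" unfolding bs by blast
      then show "y \<in> gv G x ` {w \<in> tree_verts r. length w \<le> Suc k}"
      proof cases
        case 1
        then obtain w where "w \<in> tree_verts r" "length w \<le> k" "y = gv G x w" unfolding IH[symmetric] by blast
        then show ?thesis by force
      next
        case 2
        then obtain w where w: "w \<in> tree_verts r" "length w \<le> k" "z = gv G x w" unfolding IH[symmetric] by blast
        define p where "p = vp G x w"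
        have pp: "is_path G x p" using walk_path w Suc.prems unfolding p_def by simp
        have lp: "last p = z" using w by (simp add: p_def gv_def)
        show ?thesis
        proof (cases "w \<noteq> [] \<and> y = p ! (length p - 2)")
          case True
          then have "y = gv G x (butlast w)" using vp_prev[of w G x] by (simp add: p_def)
          moreover have "butlast w \<in> tree_verts r" "length (butlast w) \<le> Suc k" using w tv_butlast by auto
          ultimately show ?thesis by blast
        next
          case False
          have "y \<in> nbs G (last p)" using 2 lp by (simp add: nbs_def)
          have lenp: "length p = Suc (length w)" by (simp add: p_def)
          from \<open>y \<in> nbs G (last p)\<close> have "y \<in> set (cand G p)" using cand_props(2)[OF G x pp] False lenp by auto
          then obtain a where a: "a < length (cand G p)" "cand G p ! a = y" by (auto simp: in_set_conv_nth)
          have "w @ [a] \<in> tree_verts r" unfolding tv_snoc using w a cand_props(3)[OF G x pp]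
            by (simp add: p_def)
          moreover have "gv G x (w @ [a]) = y" using a by (simp add: gv_snoc p_def)
          moreover have "length (w @ [a]) \<le> Suc k" using w by simp
          ultimately show ?thesis by blast
        qed
      qed
    qed
  qed
qed

lemma gv_edge:
  assumes s: "s \<in> tree_verts r" "length s \<le> l" and t: "t \<in> tree_verts r" "length t \<le> l"
  shows "{gv G x s, gv G x t} \<in> G \<longleftrightarrow> {s, t} \<in> tree_edges r"
proof
  have tedge: "{gv G x w, gv G x (w @ [a])} \<in> G" if "w @ [a] \<in> tree_verts r" "length w < l" for w a
  proof -
    have "is_path G x (vp G x (w @ [a]))" using walk_path that by auto
    then show ?thesis using pedges_snoc[of "vp G x w"] by (auto simp: is_path_def vp_snoc gv_def gv_snoc)
  qed
  assume "{s, t} \<in> tree_edges r"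
  then consider a where "t = s @ [a]" "t \<in> tree_verts r" | a where "s = t @ [a]" "s \<in> tree_verts r"
    unfolding te_iff by blast
  then show "{gv G x s, gv G x t} \<in> G"
  proof cases
    case 1 then show ?thesis using tedge[of s a] t by auto
  next
    case 2 then show ?thesis using tedge[of t a] s by (auto simp: insert_commute)
  qed
next
  assume e: "{gv G x s, gv G x t} \<in> G"
  show "{s, t} \<in> tree_edges r"
  proof (rule ccontr)
    assume nte: "{s, t} \<notin> tree_edges r"
    define p where "p = vp G x s"
    define q where "q = vp G x t"
    have pp: "is_path G x p" and pq: "is_path G x q" using walk_path s t by (auto simp: p_def q_def)
    have par: False if "u \<in> tree_verts r" "length u \<le> l" "v \<in> tree_verts r" "length v \<le> l"
       "{last (vp G x u), gv G x v} \<in> pedges (vp G x u)" "{u, v} \<notin> tree_edges r" for u v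
    proof -
      have d: "distinct (vp G x u)" using walk_path that by (auto simp: is_path_def)
      have "length (vp G x u) \<ge> 2 \<and> gv G x v = vp G x u ! (length (vp G x u) - 2)"
        using pedges_last[OF d that(5)] .
      then have une: "u \<noteq> []" by auto
      then have "gv G x v = gv G x (butlast u)" using vp_prev[of u G x] \<open>length (vp G x u) \<ge> 2 \<and> _\<close> by simp
      then have "v = butlast u" using gv_inj that tv_butlast by auto
      then have "u = v @ [last u]" using une by simp
      then have "{u, v} \<in> tree_edges r" unfolding te_iff using that(1) by blast
      then show False using that(6) by simp
    qed
    have n1: "{last p, last q} \<notin> pedges p" using par[of s t] s t nte by (auto simp: p_def q_def gv_def)
    have n2: "{last p, last q} \<notin> pedges q" using par[of t s] s t nte
      by (auto simp: p_def q_def gv_def insert_commute)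
    have "witness G l x" unfolding witness_def
      apply (rule exI[of _ p], rule exI[of _ q])
      using pp pq e n1 n2 s t by (auto simp: p_def q_def gv_def)
    then show False using nw by simp
  qed
qed

lemma good_of_nw: "good r l G x"
proof -
  define TB where "TB = {w \<in> tree_verts r. length w \<le> l}"
  define GB where "GB = ball_set G l x"
  have inj: "inj_on (gv G x) TB" unfolding TB_def by (rule inj_onI) (use gv_inj in auto)
  have img: "gv G x ` TB = GB" unfolding TB_def GB_def by (rule gv_image) simp
  have bij: "bij_betw (gv G x) TB GB" using inj img by (simp add: bij_betw_def)
  define f where "f = inv_into TB (gv G x)"
  have bf: "bij_betw f GB TB" unfolding f_def by (rule bij_betw_inv_into[OF bij])
  have nil: "[] \<in> TB" by (simp add: TB_def tv_Nil)
  have fx: "f x = []" unfolding f_def using inv_into_f_f[OF inj nil] by (simp add: gv_def)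
  have fe: "{u, v} \<in> G \<longleftrightarrow> {f u, f v} \<in> tree_edges r" if "u \<in> GB" "v \<in> GB" for u v
  proof -
    have fu: "f u \<in> TB" "gv G x (f u) = u" using that img bf unfolding f_def
      by (auto simp: bij_betw_def f_inv_into_f inv_into_into)
    have fv: "f v \<in> TB" "gv G x (f v) = v" using that img bf unfolding f_def
      by (auto simp: bij_betw_def f_inv_into_f inv_into_into)
    show ?thesis using gv_edge[of "f u" "f v"] fu fv by (simp add: TB_def)
  qed
  show ?thesis unfolding good_def rooted_iso_def tree_ball
    apply (rule exI[of _ f])
    using bf fx fe by (simp add: TB_def GB_def)
qed

end

definition Paths :: "nat set set \<Rightarrow> nat \<Rightarrow> nat \<Rightarrow> nat list set" where
  "Paths G x k = {p. is_path G x p \<and> length p = Suc k}"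

definition PL :: "nat set set \<Rightarrow> nat \<Rightarrow> nat \<Rightarrow> nat list set" where
  "PL G x l = {p. is_path G x p \<and> length p \<le> Suc l}"

lemma is_path_butlast:
  assumes "is_path G x (p @ [y])" "p \<noteq> []"
  shows "is_path G x p" "y \<in> nbs G (last p)" "y \<notin> set p"
proof -
  have pe: "pedges (p @ [y]) = pedges p \<union> {{last p, y}}" using pedges_snoc[OF assms(2)] .
  show "is_path G x p" using assms pe by (auto simp: is_path_def)
  show "y \<in> nbs G (last p)" using assms pe by (auto simp: is_path_def nbs_def)
  show "y \<notin> set p" using assms by (auto simp: is_path_def)
qed

lemma Paths_fin: assumes G: "G \<in> RegGraphs r N" and x: "x < N" shows "finite (Paths G x k)"
proof -
  have "Paths G x k \<subseteq> {p. set p \<subseteq> {..<N} \<and> length p = Suc k}"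
    using is_path_lt[OF G x] by (auto simp: Paths_def)
  then show ?thesis by (rule finite_subset) (rule finite_lists_length_eq, simp)
qed

lemma Paths_Suc:
  assumes G: "G \<in> RegGraphs r N" and x: "x < N"
  shows "card (Paths G x (Suc k)) \<le> card (Paths G x k) * (if k = 0 then r else r - 1)"
proof -
  have sub: "Paths G x (Suc k) \<subseteq> (\<lambda>(p,y). p @ [y]) ` Sigma (Paths G x k) (\<lambda>p. set (cand G p))"
  proof
    fix q assume q: "q \<in> Paths G x (Suc k)"
    then have "q \<noteq> []" "length q = Suc (Suc k)" by (auto simp: Paths_def is_path_def)
    then obtain p y where qp: "q = p @ [y]" by (cases q rule: rev_cases) auto
    have lp: "length p = Suc k" using q qp by (simp add: Paths_def)
    then have pne: "p \<noteq> []" by auto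
    have qpath: "is_path G x (p @ [y])" using q qp by (simp add: Paths_def)
    note pb = is_path_butlast[OF qpath pne]
    have "y \<in> set (cand G p)"
    proof -
      have "length p \<noteq> 1 \<Longrightarrow> p ! (length p - 2) \<in> set p" using lp by simp
      then show ?thesis using cand_props(2)[OF G x pb(1)] pb(2,3) by auto
    qed
    then have "(p, y) \<in> Sigma (Paths G x k) (\<lambda>p. set (cand G p))" using pb(1) lp by (simp add: Paths_def)
    then show "q \<in> (\<lambda>(p,y). p @ [y]) ` Sigma (Paths G x k) (\<lambda>p. set (cand G p))" using qp by force
  qed
  have fin: "finite (Sigma (Paths G x k) (\<lambda>p. set (cand G p)))" using Paths_fin[OF G x] by auto
  have "card (Paths G x (Suc k)) \<le> card (Sigma (Paths G x k) (\<lambda>p. set (cand G p)))"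
    using card_mono[OF finite_imageI[OF fin] sub] card_image_le[OF fin, of "\<lambda>(p,y). p @ [y]"] by linarith
  also have "\<dots> = (\<Sum>p\<in>Paths G x k. card (set (cand G p)))"
    using Paths_fin[OF G x] by (simp add: card_SigmaI)
  also have "\<dots> = (\<Sum>p\<in>Paths G x k. (if k = 0 then r else r - 1))"
  proof (rule sum.cong)
    fix p assume "p \<in> Paths G x k"
    then have pp: "is_path G x p" "length p = Suc k" by (auto simp: Paths_def)
    show "card (set (cand G p)) = (if k = 0 then r else r - 1)"
      using distinct_card[OF cand_props(1)[OF G x pp(1)]] cand_props(3)[OF G x pp(1)] pp(2) by simp
  qed simp
  finally show ?thesis by simp
qed

lemma Paths_0: "card (Paths G x 0) \<le> 1"
proof -
  have "Paths G x 0 \<subseteq> {[x]}" by (auto simp: Paths_def is_path_def length_Suc_conv)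
  then show ?thesis using card_mono[of "{[x]}"] by fastforce
qed

lemma Paths_bound:
  assumes G: "G \<in> RegGraphs r N" and x: "x < N" and r: "r \<ge> 3"
  shows "card (Paths G x (Suc k)) \<le> r * (r - 1) ^ k"
proof (induction k)
  case 0
  have "card (Paths G x 0) * r \<le> 1 * r" using Paths_0[of G x] by (rule mult_le_mono1)
  moreover have "card (Paths G x (Suc 0)) \<le> card (Paths G x 0) * r" using Paths_Suc[OF G x, of 0] by simp
  ultimately show ?case by (simp only: power_0 mult_1 mult_1_right)
next
  case (Suc k)
  have "card (Paths G x (Suc (Suc k))) \<le> card (Paths G x (Suc k)) * (r - 1)" using Paths_Suc[OF G x, of "Suc k"] by simp
  also have "\<dots> \<le> r * (r - 1) ^ k * (r - 1)" using Suc by simp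
  finally show ?case by (simp add: ac_simps)
qed

lemma PL_fin: assumes G: "G \<in> RegGraphs r N" and x: "x < N" shows "finite (PL G x l)"
proof -
  have "PL G x l \<subseteq> {p. set p \<subseteq> {..<N} \<and> length p \<le> Suc l}"
    using is_path_lt[OF G x] by (auto simp: PL_def)
  then show ?thesis by (rule finite_subset) (rule finite_lists_length_le, simp)
qed

lemma PL_bound:
  assumes G: "G \<in> RegGraphs r N" and x: "x < N" and r: "r \<ge> 3"
  shows "real (card (PL G x l)) \<le> real r * real (r - 1) ^ l / real (r - 2)"
proof (induction l)
  case 0
  have "PL G x 0 = Paths G x 0" by (auto simp: PL_def Paths_def is_path_def le_Suc_eq)
  then have "real (card (PL G x 0)) \<le> 1" using Paths_0[of G x] by simp
  also have "1 \<le> real r / real (r - 2)" using r by (simp add: of_nat_diff)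
  finally show ?case by simp
next
  case (Suc l)
  have "PL G x (Suc l) = PL G x l \<union> Paths G x (Suc l)" by (auto simp: PL_def Paths_def)
  then have "card (PL G x (Suc l)) \<le> card (PL G x l) + card (Paths G x (Suc l))" by (simp add: card_Un_le)
  then have "real (card (PL G x (Suc l))) \<le> real (card (PL G x l)) + real (r * (r - 1) ^ l)"
    using Paths_bound[OF G x r, of l] by linarith
  also have "\<dots> \<le> real r * real (r - 1) ^ l / real (r - 2) + real r * real (r - 1) ^ l"
    using Suc by simp
  also have "\<dots> = real r * real (r - 1) ^ Suc l / real (r - 2)"
  proof -
    have r2: "real (r - 2) > 0" "real (r - 1) = real (r - 2) + 1" using r by (auto simp: of_nat_diff)
    show ?thesis using r2 by (simp add: field_simps)
  qed
  finally show ?case .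
qed

definition Lx :: "nat \<Rightarrow> nat \<Rightarrow> nat \<Rightarrow> nat list set" where
  "Lx N l x = {p. p \<noteq> [] \<and> hd p = x \<and> distinct p \<and> set p \<subseteq> {..<N} \<and> length p \<le> Suc l}"

definition W :: "nat \<Rightarrow> nat \<Rightarrow> nat \<Rightarrow> (nat list \<times> nat list) set" where
  "W N l x = {(p,q). p \<in> Lx N l x \<and> q \<in> Lx N l x \<and> {last p, last q} \<notin> pedges p \<union> pedges q
      \<and> card {last p, last q} = 2}"

definition Qw :: "nat set set \<Rightarrow> nat list \<times> nat list \<Rightarrow> bool" where
  "Qw G w = (pedges (fst w) \<union> pedges (snd w) \<subseteq> G \<and> {last (fst w), last (snd w)} \<in> G)"

definition Rw :: "nat set set \<Rightarrow> nat list \<times> nat list \<Rightarrow> bool" where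
  "Rw G w = (pedges (fst w) \<union> pedges (snd w) \<subseteq> G)"

lemma Lx_fin: "finite (Lx N l x)"
  by (rule finite_subset[OF _ finite_lists_length_le[of "{..<N}" "Suc l"]]) (auto simp: Lx_def)

lemma W_fin: "finite (W N l x)"
  by (rule finite_subset[of _ "Lx N l x \<times> Lx N l x"]) (auto simp: W_def Lx_fin)

lemma pedges_fin: "finite (pedges p)" and pedges_card: "card (pedges p) \<le> length p - 1"
proof -
  have e: "pedges p = (\<lambda>i. {p!i, p!Suc i}) ` {..<length p - 1}" by (auto simp: pedges_def)
  show "finite (pedges p)" unfolding e by simp
  show "card (pedges p) \<le> length p - 1" unfolding e using card_image_le[of "{..<length p - 1}"] by simp
qed

lemma pedges_card2: assumes "distinct p" "t \<in> pedges p" shows "card t = 2"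
proof -
  obtain i where i: "t = {p!i, p!Suc i}" "Suc i < length p" using assms(2) by (auto simp: pedges_def)
  then have "p!i \<noteq> p!Suc i" using assms(1) by (simp add: nth_eq_iff_index_eq)
  then show ?thesis using i by simp
qed

lemma card_filter_sum: "finite A \<Longrightarrow> card {w\<in>A. P w} = (\<Sum>w\<in>A. if P w then 1 else 0)"
  by (simp add: sum.If_cases Int_def)

lemma sum_card_swap:
  assumes "finite S" "finite A"
  shows "(\<Sum>G\<in>S. card {w\<in>A. P G w}) = (\<Sum>w\<in>A. card {G\<in>S. P G w})"
proof -
  have "(\<Sum>G\<in>S. card {w\<in>A. P G w}) = (\<Sum>G\<in>S. \<Sum>w\<in>A. if P G w then 1 else 0)"
    using assms by (simp add: card_filter_sum)
  also have "\<dots> = (\<Sum>w\<in>A. \<Sum>G\<in>S. if P G w then 1 else 0)" by (rule sum.swap)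
  also have "\<dots> = (\<Sum>w\<in>A. card {G\<in>S. P G w})"
    using assms by (simp add: card_filter_sum)
  finally show ?thesis .
qed

lemma bad_le:
  assumes G: "G \<in> RegGraphs r N"
  shows "card (bad r N l G) \<le> (\<Sum>x<N. card {w \<in> W N l x. Qw G w})"
proof -
  have "bad r N l G \<subseteq> {x\<in>{..<N}. witness G l x}"
    using good_of_nw[OF G] by (auto simp: bad_def)
  then have "card (bad r N l G) \<le> card {x\<in>{..<N}. witness G l x}" by (rule card_mono[rotated]) simp
  also have "\<dots> = (\<Sum>x<N. if witness G l x then 1 else 0)"
    by (rule card_filter_sum) simp
  also have "\<dots> \<le> (\<Sum>x<N. card {w \<in> W N l x. Qw G w})"
  proof (rule sum_mono)
    fix x assume x: "x \<in> {..<N}"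
    show "(if witness G l x then 1 else 0) \<le> card {w \<in> W N l x. Qw G w}"
    proof (cases "witness G l x")
      case True
      then obtain p q where pq: "is_path G x p" "is_path G x q" "length p \<le> Suc l" "length q \<le> Suc l"
        "{last p, last q} \<in> G" "{last p, last q} \<notin> pedges p \<union> pedges q"
        unfolding witness_def by blast
      have "set p \<subseteq> {..<N}" "set q \<subseteq> {..<N}" using is_path_lt[OF G] x pq by auto
      moreover have "card {last p, last q} = 2" using RG_edge[OF G pq(5)] by simp
      ultimately have "(p,q) \<in> {w \<in> W N l x. Qw G w}" using pq
        by (auto simp: W_def Lx_def Qw_def is_path_def)
      moreover have "finite {w \<in> W N l x. Qw G w}" using W_fin by simp
      ultimately have "card {w \<in> W N l x. Qw G w} > 0" by (auto simp: card_gt_0_iff)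
      then show ?thesis by simp
    qed simp
  qed
  finally show ?thesis .
qed

lemma Qw_bound:
  assumes w: "w \<in> W N l x" and big: "real r * N - 8 * l - 4 * r - 2 * r^2 \<ge> real r * N / 2" and N: "N > 0" and r0: "r > 0"
  shows "real (card {G\<in>RegGraphs r N. Qw G w}) \<le> 2 * r / N * card {G\<in>RegGraphs r N. Rw G w}"
proof -
  obtain p q where wpq: "w = (p,q)" by (cases w)
  define T where "T = pedges p \<union> pedges q"
  have pq: "p \<in> Lx N l x" "q \<in> Lx N l x" "{last p, last q} \<notin> T" "card {last p, last q} = 2"
    using w by (auto simp: W_def wpq T_def)
  have finT: "finite T" by (simp add: T_def pedges_fin)
  have T2: "\<forall>t\<in>T. card t = 2" using pq pedges_card2 by (auto simp: T_def Lx_def)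
  have uv: "last p \<noteq> last q" using pq(4) by auto
  have cT: "card T \<le> 2 * l"
  proof -
    have "card T \<le> card (pedges p) + card (pedges q)" unfolding T_def by (rule card_Un_le)
    also have "\<dots> \<le> l + l" using pedges_card[of p] pedges_card[of q] pq by (auto simp: Lx_def)
    finally show ?thesis by simp
  qed
  note sw = switching[OF finT T2 uv pq(3), of r N]
  have eA: "{G\<in>RegGraphs r N. Qw G w} = {G\<in>RegGraphs r N. T \<subseteq> G \<and> {last p, last q} \<in> G}"
    by (auto simp: Qw_def wpq T_def)
  have eB: "{G\<in>RegGraphs r N. Rw G w} = {G\<in>RegGraphs r N. T \<subseteq> G}"
    by (auto simp: Rw_def wpq T_def)
  define A where "A = real (card {G\<in>RegGraphs r N. T \<subseteq> G \<and> {last p, last q} \<in> G})"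
  define B where "B = real (card {G\<in>RegGraphs r N. T \<subseteq> G})"
  have "4 * card T \<le> 8 * l" using cT by simp
  then have c1: "real (4 * card T) \<le> real (8 * l)" by (simp only: of_nat_le_iff)
  have c2: "real (8 * l) = 8 * real l" "real (4 * r) = 4 * real r" "real (2 * r^2) = 2 * real r ^ 2" by simp_all
  have "real r * N / 2 \<le> real r * N - real (4 * card T) - real (4 * r) - real (2 * r^2)"
    using big c1 c2 by linarith
  then have "A * (real r * N / 2) \<le> A * (real r * N - real (4 * card T) - real (4 * r) - real (2 * r^2))"
    by (rule mult_left_mono) (simp add: A_def)
  also have "\<dots> \<le> r^2 * B" using sw unfolding A_def B_def by simp
  finally have "A * (real r * N / 2) \<le> r^2 * B" .
  then have "A * (real r * N) \<le> (2 * r * B) * r" by (simp add: power2_eq_square field_simps)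
  then have "(A * N) * real r \<le> (2 * r * B) * real r" by (simp add: algebra_simps)
  then have "A * N \<le> 2 * r * B" by (rule mult_right_le_imp_le) (use r0 in simp)
  then have "A \<le> 2 * r / N * B" using N by (simp add: field_simps)
  then show ?thesis unfolding eA eB A_def B_def by simp
qed

lemma Rw_sub: "{w\<in>W N l x. Rw G w} \<subseteq> PL G x l \<times> PL G x l"
  by (auto simp: W_def Lx_def Rw_def PL_def is_path_def)

lemma sum_bad_bound:
  assumes r3: "r \<ge> 3" and big: "real r * N - 8 * l - 4 * r - 2 * r^2 \<ge> real r * N / 2" and N: "N > 0"
  shows "real (\<Sum>G\<in>RegGraphs r N. card (bad r N l G))
     \<le> 2 * r * card (RegGraphs r N) * (real r * real (r - 1) ^ l / real (r - 2))^2"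
proof -
  define S where "S = RegGraphs r N"
  define Mb where "Mb = real r * real (r - 1) ^ l / real (r - 2)"
  have finS: "finite S" by (simp add: S_def RG_finite)
  have "real (\<Sum>G\<in>S. card (bad r N l G)) \<le> real (\<Sum>G\<in>S. (\<Sum>x<N. card {w \<in> W N l x. Qw G w}))"
    by (rule of_nat_mono, rule sum_mono) (use bad_le in \<open>auto simp: S_def\<close>)
  also have "\<dots> = (\<Sum>x<N. real (\<Sum>G\<in>S. card {w \<in> W N l x. Qw G w}))"
    unfolding of_nat_sum by (rule sum.swap)
  also have "\<dots> = (\<Sum>x<N. real (\<Sum>w\<in>W N l x. card {G\<in>S. Qw G w}))"
    using sum_card_swap[OF finS W_fin] by simp
  also have "\<dots> \<le> (\<Sum>x<N. (\<Sum>w\<in>W N l x. 2 * r / N * real (card {G\<in>S. Rw G w})))"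
    unfolding of_nat_sum
    by (rule sum_mono, rule sum_mono) (use Qw_bound[OF _ big N] r3 in \<open>auto simp: S_def\<close>)
  also have "\<dots> = 2 * r / N * (\<Sum>x<N. real (\<Sum>w\<in>W N l x. card {G\<in>S. Rw G w}))"
    by (simp add: sum_distrib_left)
  also have "\<dots> = 2 * r / N * (\<Sum>x<N. real (\<Sum>G\<in>S. card {w\<in>W N l x. Rw G w}))"
    using sum_card_swap[OF finS W_fin] by simp
  also have "\<dots> \<le> 2 * r / N * (\<Sum>x<N. (\<Sum>G\<in>S. Mb^2))"
  proof -
    have "(\<Sum>x<N. real (\<Sum>G\<in>S. card {w\<in>W N l x. Rw G w})) \<le> (\<Sum>x<N. \<Sum>G\<in>S. Mb\<^sup>2)"
      unfolding of_nat_sum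
    proof (rule sum_mono, rule sum_mono)
      fix x G assume x: "x \<in> {..<N}" and G: "G \<in> S"
      have G': "G \<in> RegGraphs r N" and x': "x < N" using x G by (auto simp: S_def)
      have "card {w\<in>W N l x. Rw G w} \<le> card (PL G x l \<times> PL G x l)"
        by (rule card_mono[OF _ Rw_sub]) (simp add: PL_fin[OF G' x'])
      then have "real (card {w\<in>W N l x. Rw G w}) \<le> real (card (PL G x l)) ^ 2"
        unfolding card_cartesian_product power2_eq_square of_nat_mult[symmetric] of_nat_le_iff .
      also have "\<dots> \<le> Mb ^ 2" unfolding Mb_def
        by (rule power_mono[OF PL_bound[OF G' x' r3]]) simp
      finally show "real (card {w\<in>W N l x. Rw G w}) \<le> Mb ^ 2" .
    qed
    then show ?thesis by (rule mult_left_mono) simp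
  qed
  also have "\<dots> = 2 * r * card S * Mb^2" using N by simp
  finally show ?thesis unfolding S_def Mb_def .
qed

lemma pow2_lin: "32 * n \<le> 2 ^ n + (128::nat)"
proof (cases "n \<le> 4")
  case True then show ?thesis by simp
next
  case False
  then have "n \<ge> 5" by simp
  then show ?thesis
  proof (induction n rule: nat_induct_at_least)
    case base then show ?case by simp
  next
    case (Suc n)
    have "(2::nat) ^ 5 \<le> 2 ^ n" by (rule power_increasing) (use Suc in auto)
    then show ?case using Suc by simp
  qed
qed

lemma c_facts:
  assumes r3: "r \<ge> 3"
  shows "real r ^ 2 * real (r - 1) powi (2 * int l - 2) = real r ^ 2 * real (r - 1) ^ (2 * l) / real (r - 1) ^ 2"
    and "real r ^ 2 * real (r - 1) powi (2 * int l - 2) \<ge> 1"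
    and "(real r * real (r - 1) ^ l / real (r - 2))^2 \<le> 4 * (real r ^ 2 * real (r - 1) powi (2 * int l - 2))"
proof -
  define a where "a = real (r - 1)"
  define b where "b = real (r - 2)"
  have ab: "a = b + 1" "b \<ge> 1" using r3 by (auto simp: a_def b_def of_nat_diff)
  have a0: "a \<noteq> 0" using ab by simp
  have "a powi (2 * int l - 2) = a powi (2 * int l) / a powi 2"
    by (rule power_int_diff) (use a0 in simp)
  also have "a powi (2 * int l) = a ^ (2 * l)"
    using power_int_of_nat[of a "2 * l"] by simp
  finally have e: "a powi (2 * int l - 2) = a ^ (2 * l) / a ^ 2" by simp
  show c1: "real r ^ 2 * real (r - 1) powi (2 * int l - 2) = real r ^ 2 * real (r - 1) ^ (2 * l) / real (r - 1) ^ 2"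
    using e unfolding a_def by simp
  have ra: "real r \<ge> a" "a \<ge> 1" using ab r3 by (auto simp: a_def)
  have "1 \<le> a ^ (2 * l)" using ra(2) by (rule one_le_power)
  moreover have "a ^ 2 \<le> real r ^ 2" using ra by (intro power_mono) auto
  ultimately have "a ^ 2 \<le> real r ^ 2 * a ^ (2 * l)"
    by (metis mult.right_neutral mult_mono order_trans zero_le_one zero_le_power2 dual_order.refl)
  moreover have "a ^ 2 > 0" using ra by simp
  ultimately have g: "1 \<le> real r ^ 2 * a ^ (2 * l) / a ^ 2" by (simp add: le_divide_eq)
  show "real r ^ 2 * real (r - 1) powi (2 * int l - 2) \<ge> 1"
    by (subst c1) (use g in \<open>simp add: a_def\<close>)
  define X where "X = real r ^ 2 * a ^ (2 * l)"
  have X0: "X \<ge> 0" by (simp add: X_def)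
  have "(real r * a ^ l / b)^2 = X / b^2"
    by (simp add: X_def power_divide power_mult_distrib power_mult[symmetric] mult.commute)
  also have "\<dots> \<le> 4 * X / a^2"
  proof -
    have "a^2 \<le> (2*b)^2" using ab by (intro power_mono) auto
    then have "X * a^2 \<le> X * (4 * b^2)" using X0 by (intro mult_left_mono) (auto simp: power_mult_distrib)
    then show ?thesis using ab by (simp add: field_simps)
  qed
  also have "\<dots> = 4 * (real r ^ 2 * real (r - 1) powi (2 * int l - 2))"
    unfolding a_def[symmetric] X_def e by simp
  finally show "(real r * real (r - 1) ^ l / real (r - 2))^2 \<le> 4 * (real r ^ 2 * real (r - 1) powi (2 * int l - 2))"
    unfolding a_def b_def .
qed

theorem lemma4p2:
  fixes r :: nat and l :: "nat \<Rightarrow> nat"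
  assumes "r \<ge> 3"
    and "\<forall>N. even N \<and> N > 0 \<longrightarrow> real (l N) < log (real (r - 1)) (5 * real N)"
  shows "\<exists>K2::real. \<forall>N (z::real). even N \<and> RegGraphs r N \<noteq> {} \<and> z > 0 \<longrightarrow>
           measure_pmf.prob (pmf_of_set (RegGraphs r N))
             {E. real (card (bad r N (l N) E))
                   \<ge> real r ^ 2 * real (r - 1) powi (2 * int (l N) - 2) * z}
           \<le> K2 / z"
proof -
  have r3: "r \<ge> 3" using assms(1) .
  define N0 :: real where "N0 = 128 + 16 * r + 8 * r^2"
  define K where "K = max (8 * real r) N0"
  show ?thesis
  proof (rule exI[of _ K], intro allI impI)
    fix N and z :: real
    assume H: "even N \<and> RegGraphs r N \<noteq> {} \<and> z > 0"
    define S where "S = RegGraphs r N"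
    define c where "c = real r ^ 2 * real (r - 1) powi (2 * int (l N) - 2)"
    have Sne: "S \<noteq> {}" and z: "z > 0" and ev: "even N" using H by (auto simp: S_def)
    have finS: "finite S" by (simp add: S_def RG_finite)
    have c1: "c \<ge> 1" unfolding c_def by (rule c_facts(2)[OF r3])
    have sumb: "real (\<Sum>G\<in>S. card (bad r N (l N) G)) \<le> K * c * card S"
    proof (cases "real N \<ge> N0")
      case True
      have "N0 > 0" unfolding N0_def by (simp add: add_pos_nonneg)
      then have N: "N > 0" using True by simp
      have lg: "real (l N) < log (real (r - 1)) (5 * real N)" using assms(2) ev N by auto
      have r1: "real (r - 1) > 1" using r3 by (simp add: of_nat_diff)
      have "real (r - 1) powr real (l N) < 5 * real N"
        using lg less_log_iff[OF r1, of "5 * real N"] N by simp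
      then have "real (r - 1) ^ l N < 5 * real N" using r1 by (simp add: powr_realpow)
      moreover have "(2::real) ^ l N \<le> real (r - 1) ^ l N" using r1 by (intro power_mono) auto
      ultimately have p2: "(2::real) ^ l N < 5 * real N" by linarith
      have "real (32 * l N) \<le> real (2 ^ l N + 128)" using pow2_lin[of "l N"] by (simp only: of_nat_le_iff)
      then have "32 * real (l N) \<le> 2 ^ l N + 128" by simp
      moreover have "real r * real N \<ge> 3 * real N" using r3 by (intro mult_right_mono) auto
      ultimately have big: "real r * real N - 8 * real (l N) - 4 * real r - 2 * real r ^ 2 \<ge> real r * real N / 2"
        using p2 True unfolding N0_def
        by (simp only: of_nat_add of_nat_mult of_nat_power of_nat_numeral)
      have "real (\<Sum>G\<in>S. card (bad r N (l N) G))
          \<le> real (2 * r * card S) * (real r * real (r - 1) ^ (l N) / real (r - 2))^2"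
        unfolding S_def by (rule sum_bad_bound[OF r3 big N])
      also have "\<dots> \<le> real (2 * r * card S) * (4 * c)"
        by (rule mult_left_mono) (use c_facts(3)[OF r3, of "l N"] in \<open>simp_all add: c_def\<close>)
      also have "\<dots> = (8 * real r) * c * real (card S)" by simp
      also have "\<dots> \<le> K * c * card S"
        by (intro mult_right_mono) (use c1 in \<open>auto simp: K_def\<close>)
      finally show ?thesis .
    next
      case False
      have "real (\<Sum>G\<in>S. card (bad r N (l N) G)) \<le> real (\<Sum>G\<in>S. N)"
      proof (rule of_nat_mono, rule sum_mono)
        fix G show "card (bad r N (l N) G) \<le> N"
          using card_mono[of "{..<N}" "bad r N (l N) G"] by (auto simp: bad_def)
      qed
      also have "\<dots> = real N * card S" by simp
      also have "\<dots> \<le> N0 * card S" using False by (intro mult_right_mono) auto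
      also have "\<dots> \<le> K * c * card S"
      proof (intro mult_right_mono)
        have "N0 \<le> K" by (simp add: K_def)
        moreover have "K \<ge> 0" by (simp add: K_def)
        ultimately show "N0 \<le> K * c" using c1
          by (metis mult.right_neutral mult_left_mono order_trans)
      qed simp
      finally show ?thesis .
    qed
    define A where "A = {G\<in>S. real (card (bad r N (l N) G)) \<ge> c * z}"
    have "real (card A) * (c * z) = (\<Sum>G\<in>A. c * z)" by simp
    also have "\<dots> \<le> (\<Sum>G\<in>A. real (card (bad r N (l N) G)))"
      by (rule sum_mono) (simp add: A_def)
    also have "\<dots> \<le> (\<Sum>G\<in>S. real (card (bad r N (l N) G)))"
      by (rule sum_mono2) (use finS in \<open>auto simp: A_def\<close>)
    also have "\<dots> \<le> K * c * card S" using sumb by simp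
    finally have markov: "real (card A) * (c * z) \<le> K * c * card S" .
    have cS: "real (card S) > 0" using Sne finS by (simp add: card_gt_0_iff)
    have cz: "c * z > 0" using c1 z by simp
    have "measure_pmf.prob (pmf_of_set S) {E. real (card (bad r N (l N) E)) \<ge> c * z} = real (card A) / card S"
      using measure_pmf_of_set[OF Sne finS] by (simp add: A_def Int_def conj_commute)
    also have "\<dots> \<le> K / z"
    proof -
      have "K * c * card S = (K * card S / z) * (c * z)" using z by (simp add: field_simps)
      then have "real (card A) * (c * z) \<le> (K * card S / z) * (c * z)" using markov by simp
      then have "real (card A) \<le> K * card S / z" by (rule mult_right_le_imp_le) (use cz in simp)
      moreover have eqK: "K / z * card S = K * card S / z" by (rule times_divide_eq_left)
      ultimately have "real (card A) \<le> K / z * card S" by (simp only: eqK)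
      then show ?thesis unfolding pos_divide_le_eq[OF cS] .
    qed
    finally show "measure_pmf.prob (pmf_of_set (RegGraphs r N))
             {E. real (card (bad r N (l N) E))
                   \<ge> real r ^ 2 * real (r - 1) powi (2 * int (l N) - 2) * z} \<le> K / z"
      unfolding S_def c_def .
  qed
qed


end
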